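(* Let $p$ be an external position with $m=|B(p)|\ge 2$, and let $j_1\le\dots\le j_{n-m}$ be the values $\bar p_i$, $i\notin B(p)$, in non-decreasing order. Then: (a) the independent rotation group satisfies $G_{rot}(p)=\mathrm{Alt}(B(p))$ if $m=n$ and $G_{rot}(p)=\mathrm{Sym}(B(p))$ if $m<n$; (b) the dependent rotation group satisfies $\overline{G}_{rot}(p)=\mathrm{Alt}(B(p))$ if $m=n$ or $j_1<j_2<\dots<j_{n-m}<(k-1)/2$, and $\overline{G}_{rot}(p)=\mathrm{Sym}(B(p))$ if $m<n$ and either $j_{n-m}=(k-1)/2$ or there is $r$ with $j_r=j_{r+1}<(k-1)/2$.
   Context: Fix integers $k\ge 2$, $n\ge 3$, $M=\{0,\dots,k-1\}$. Positions are $p\in M^n$ (cubie $\prod_i[p_i,p_i+1]\subset[0,k]^n$); $B(p)=\{i:p_i\in\{0,k-1\}\}$, $p$ external if $B(p)\ne\emptyset$; for $x\in\{1,\dots,k-2\}$, $\bar x=\min(x,k-1-x)$. For distinct $i,j$, $\psi_{i,j}:M^n\to M^n$ is $(\psi_{i,j}p)_i=k-1-p_j$, $(\psi_{i,j}p)_j=p_i$, other coordinates unchanged; note $B(\psi_{i,j}p)=\tau_{ij}(B(p))$ with $\tau_{ij}$ the transposition of $i,j$. A move is given by distinct $i,j$ and constants $c_l\in M$ ($l\notin\{i,j\}$) and applies $\psi_{i,j}$ to all positions $p$ with $p_l=c_l$ ($l\notin\{i,j\}$), fixing the others; a combination is a finite sequence of moves. Orientation faces: the cubie at an external $p$ has $|B(p)|$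 orientation faces indexed by $l\in B(p)$, face $l$ being the intersection of the cubie with the hyperplanes $x_s=0$ (if $p_s=0$) or $x_s=k$ (if $p_s=k-1$) for $s\in B(p)\setminus\{l\}$. Let $X=\{(p,l): p\text{ external}, l\in B(p)\}$; a move with parameters $i,j$ acts on $X$ by $(p,l)\mapsto(\psi_{i,j}(p),\tau_{ij}(l))$ for $p$ in its layer and fixes $(p,l)$ otherwise; a combination acts on $X$ by composition (this tracks where each orientation face of each cubie goes). The dependent rotation group $\overline{G}_{rot}(p)$ is the set of permutations of $B(p)$ induced on $\{p\}\times B(p)$ by combinations $g$ with $g(p)=p$. The independent rotation group $G_{rot}(p)$ is the group of permutations of the orientation faces of the cubie at $p$ (identified with permutations of $B(p)$) induced by orientation-preserving isometries of $\mathbb{R}^n$ that map the cubie onto itself and map its set of orientation faces onto itself. *)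

theory Defs
  imports "HOL-Analysis.Analysis" "HOL-Combinatorics.Combinatorics" "HOL-Library.Multiset"
begin

(* Coordinates are indexed by a finite type 'n, with n = CARD('n).
   A position is a function p :: 'n => nat with all values < k (i.e. p in M^n). *)

definition Bset :: "nat \<Rightarrow> ('n \<Rightarrow> nat) \<Rightarrow> 'n set" where
  "Bset k p = {i. p i = 0 \<or> p i = k - 1}"

definition bar :: "nat \<Rightarrow> nat \<Rightarrow> nat" where
  "bar k x = min x (k - 1 - x)"

definition psi :: "nat \<Rightarrow> 'n \<Rightarrow> 'n \<Rightarrow> ('n \<Rightarrow> nat) \<Rightarrow> ('n \<Rightarrow> nat)" where
  "psi k i j q = q(i := k - 1 - q j, j := q i)"

(* a move: (i, j, c); c l is the constant for l \<notin> {i,j} (values of c at i, j are irrelevant) *)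
type_synonym 'n move = "'n \<times> 'n \<times> ('n \<Rightarrow> nat)"

definition valid_move :: "nat \<Rightarrow> 'n move \<Rightarrow> bool" where
  "valid_move k mv = (case mv of (i, j, c) \<Rightarrow> i \<noteq> j \<and> (\<forall>l. l \<notin> {i, j} \<longrightarrow> c l < k))"

definition in_layer :: "'n move \<Rightarrow> ('n \<Rightarrow> nat) \<Rightarrow> bool" where
  "in_layer mv q = (case mv of (i, j, c) \<Rightarrow> (\<forall>l. l \<notin> {i, j} \<longrightarrow> q l = c l))"

definition move_pos :: "nat \<Rightarrow> 'n move \<Rightarrow> ('n \<Rightarrow> nat) \<Rightarrow> ('n \<Rightarrow> nat)" where
  "move_pos k mv q = (case mv of (i, j, c) \<Rightarrow> if in_layer mv q then psi k i j q else q)"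

(* action of a move on X (pairs of a position and an orientation-face index) *)
definition move_X :: "nat \<Rightarrow> 'n move \<Rightarrow> ('n \<Rightarrow> nat) \<times> 'n \<Rightarrow> ('n \<Rightarrow> nat) \<times> 'n" where
  "move_X k mv x = (case mv of (i, j, c) \<Rightarrow> case x of (q, l) \<Rightarrow>
     if in_layer mv q then (psi k i j q, Transposition.transpose i j l) else (q, l))"

(* combination = list of moves, first move applied first *)
fun comb_pos :: "nat \<Rightarrow> 'n move list \<Rightarrow> ('n \<Rightarrow> nat) \<Rightarrow> ('n \<Rightarrow> nat)" where
  "comb_pos k [] q = q"
| "comb_pos k (mv # ms) q = comb_pos k ms (move_pos k mv q)"

fun comb_X :: "nat \<Rightarrow> 'n move list \<Rightarrow> ('n \<Rightarrow> nat) \<times> 'n \<Rightarrow> ('n \<Rightarrow> nat) \<times> 'n" where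
  "comb_X k [] x = x"
| "comb_X k (mv # ms) x = comb_X k ms (move_X k mv x)"

definition Sym :: "'n set \<Rightarrow> ('n \<Rightarrow> 'n) set" where
  "Sym B = {\<sigma>. \<sigma> permutes B}"

definition Alt :: "'n set \<Rightarrow> ('n \<Rightarrow> 'n) set" where
  "Alt B = {\<sigma>. \<sigma> permutes B \<and> evenperm \<sigma>}"

definition Gbar_rot :: "nat \<Rightarrow> ('n \<Rightarrow> nat) \<Rightarrow> ('n \<Rightarrow> 'n) set" where
  "Gbar_rot k p = {\<sigma>. \<sigma> permutes Bset k p \<and>
     (\<exists>ms. (\<forall>mv\<in>set ms. valid_move k mv) \<and> comb_pos k ms p = p \<and>
           (\<forall>l\<in>Bset k p. comb_X k ms (p, l) = (p, \<sigma> l)))}"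

definition cubie :: "('n::finite \<Rightarrow> nat) \<Rightarrow> (real^'n) set" where
  "cubie p = {x. \<forall>i. real (p i) \<le> x $ i \<and> x $ i \<le> real (p i) + 1}"

definition orient_face :: "nat \<Rightarrow> ('n::finite \<Rightarrow> nat) \<Rightarrow> 'n \<Rightarrow> (real^'n) set" where
  "orient_face k p l = {x \<in> cubie p. \<forall>s \<in> Bset k p - {l}.
       x $ s = (if p s = 0 then 0 else real k)}"

definition orient_faces :: "nat \<Rightarrow> ('n::finite \<Rightarrow> nat) \<Rightarrow> (real^'n) set set" where
  "orient_faces k p = orient_face k p ` Bset k p"

definition orient_pres_isometry :: "(real^'n::finite \<Rightarrow> real^'n) \<Rightarrow> bool" where
  "orient_pres_isometry f \<longleftrightarrow> (\<forall>x y. dist (f x) (f y) = dist x y) \<and>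
      det (matrix (\<lambda>x. f x - f 0)) = 1"

definition G_rot :: "nat \<Rightarrow> ('n::finite \<Rightarrow> nat) \<Rightarrow> ('n \<Rightarrow> 'n) set" where
  "G_rot k p = {\<sigma>. \<sigma> permutes Bset k p \<and>
     (\<exists>f. orient_pres_isometry f \<and> f ` cubie p = cubie p \<and>
          (\<lambda>F. f ` F) ` orient_faces k p = orient_faces k p \<and>
          (\<forall>l\<in>Bset k p. f ` orient_face k p l = orient_face k p (\<sigma> l)))}"

(* the values \<bar>p_i, i \<notin> B(p), sorted non-decreasingly (0-based list) *)
definition jlist :: "nat \<Rightarrow> ('n::finite \<Rightarrow> nat) \<Rightarrow> nat list" where
  "jlist k p = sorted_list_of_multiset (image_mset (\<lambda>i. bar k (p i)) (mset_set (- Bset k p)))"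

end

theory Submission
  imports Defs
begin


fun wpos :: "nat \<Rightarrow> ('n \<times> 'n) list \<Rightarrow> ('n \<Rightarrow> nat) \<Rightarrow> ('n \<Rightarrow> nat)" where
  "wpos k [] q = q"
| "wpos k (ij # ws) q = wpos k ws (psi k (fst ij) (snd ij) q)"

fun wlab :: "('n \<times> 'n) list \<Rightarrow> 'n \<Rightarrow> 'n" where
  "wlab [] l = l"
| "wlab (ij # ws) l = wlab ws (Transposition.transpose (fst ij) (snd ij) l)"

lemma psi_lt: "\<forall>i. q i < k \<Longrightarrow> \<forall>i. psi k a b q i < k"
  by (auto simp: psi_def)

lemma word_moves:
  assumes "\<forall>ij\<in>set ws. fst ij \<noteq> snd ij" "\<forall>i. q i < k"
  shows "\<exists>ms. (\<forall>mv\<in>set ms. valid_move k mv) \<and> comb_pos k ms q = wpos k ws q \<and>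
     (\<forall>l. comb_X k ms (q, l) = (wpos k ws q, wlab ws l))"
  using assms
proof (induction ws arbitrary: q)
  case Nil
  then show ?case by (intro exI[of _ "[]"]) auto
next
  case (Cons ij ws)
  obtain i j where ij: "ij = (i, j)" by (cases ij)
  have ne: "i \<noteq> j" using Cons.prems ij by auto
  have "\<forall>i. psi k i j q i < k" using psi_lt[OF Cons.prems(2)] by blast
  from Cons.IH[of "psi k i j q"] Cons.prems psi_lt[OF Cons.prems(2)] obtain ms where
    ms: "(\<forall>mv\<in>set ms. valid_move k mv)" "comb_pos k ms (psi k i j q) = wpos k ws (psi k i j q)"
     "\<forall>l. comb_X k ms (psi k i j q, l) = (wpos k ws (psi k i j q), wlab ws l)"
    by auto
  have lay: "in_layer (i, j, q) q" by (simp add: in_layer_def)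
  show ?case
    apply (intro exI[of _ "(i, j, q) # ms"])
    using ms ne Cons.prems(2) lay ij
    by (auto simp: valid_move_def move_pos_def move_X_def)
qed

definition Reach :: "nat \<Rightarrow> ('n \<Rightarrow> nat) \<Rightarrow> ('n \<Rightarrow> 'n) \<Rightarrow> ('n \<Rightarrow> nat) \<Rightarrow> bool" where
  "Reach k q \<sigma> q' \<longleftrightarrow> (\<exists>ws. (\<forall>ij\<in>set ws. fst ij \<noteq> snd ij) \<and> wpos k ws q = q' \<and> (\<forall>l. wlab ws l = \<sigma> l))"

lemma wpos_append: "wpos k (ws1 @ ws2) q = wpos k ws2 (wpos k ws1 q)"
  by (induction ws1 arbitrary: q) auto

lemma wlab_append: "wlab (ws1 @ ws2) l = wlab ws2 (wlab ws1 l)"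
  by (induction ws1 arbitrary: l) auto

lemma Reach_trans: "Reach k q \<sigma> q' \<Longrightarrow> Reach k q' \<tau> q'' \<Longrightarrow> Reach k q (\<tau> \<circ> \<sigma>) q''"
  unfolding Reach_def
  apply clarify
  subgoal for ws1 ws2
    by (intro exI[of _ "ws1 @ ws2"]) (auto simp: wpos_append wlab_append)
  done

lemma Reach_id: "Reach k q id q"
  unfolding Reach_def by (intro exI[of _ "[]"]) auto

lemma Reach_psi: "i \<noteq> j \<Longrightarrow> Reach k q (Transposition.transpose i j) (psi k i j q)"
  unfolding Reach_def by (intro exI[of _ "[(i,j)]"]) auto

lemma Reach_N: "i \<noteq> j \<Longrightarrow> Reach k q id (q(i := k - 1 - q i, j := k - 1 - q j))"
proof -
  assume ij: "i \<noteq> j"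
  have "Reach k q (Transposition.transpose i j \<circ> Transposition.transpose i j) (psi k i j (psi k i j q))"
    by (rule Reach_trans[OF Reach_psi Reach_psi]) (use ij in auto)
  moreover have "psi k i j (psi k i j q) = q(i := k - 1 - q i, j := k - 1 - q j)"
    using ij by (auto simp: psi_def)
  ultimately show ?thesis by simp
qed


lemma Reach_fix: "Reach k q \<sigma> r \<Longrightarrow> Reach k r id q' \<Longrightarrow> Reach k q \<sigma> q'"
  using Reach_trans[of k q \<sigma> r id q'] by simp

lemma three_cycle:
  assumes d: "a \<noteq> b" "b \<noteq> c" "a \<noteq> c" and k: "k \<ge> 2"
    and v: "p a = 0 \<or> p a = k - 1" "p b = 0 \<or> p b = k - 1" "p c = 0 \<or> p c = k - 1"
  shows "Reach k p (Transposition.transpose b c \<circ> Transposition.transpose a b) p"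
proof -
  let ?r = "psi k b c (psi k a b p)"
  have R: "Reach k p (Transposition.transpose b c \<circ> Transposition.transpose a b) ?r"
    by (rule Reach_trans[OF Reach_psi Reach_psi]) (use d in auto)
  have r: "?r = p(a := k - 1 - p b, b := k - 1 - p c, c := p a)"
    using d by (auto simp: psi_def fun_eq_iff)
  show ?thesis
  proof (cases "p a = p c")
    case ac: True
    show ?thesis
    proof (cases "p a = p b")
      case True
      have "Reach k ?r id (?r(a := k - 1 - ?r a, b := k - 1 - ?r b))" by (rule Reach_N) (use d in auto)
      moreover have "?r(a := k - 1 - ?r a, b := k - 1 - ?r b) = p"
        unfolding r using d k v ac True by (auto simp: fun_eq_iff)
      ultimately show ?thesis using Reach_fix[OF R] by metis
    next
      case False
      have "?r = p" unfolding r using d k v ac False by (auto simp: fun_eq_iff)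
      then show ?thesis using R by simp
    qed
  next
    case ac: False
    show ?thesis
    proof (cases "p a = p b")
      case True
      have "Reach k ?r id (?r(a := k - 1 - ?r a, c := k - 1 - ?r c))" by (rule Reach_N) (use d in auto)
      moreover have "?r(a := k - 1 - ?r a, c := k - 1 - ?r c) = p"
        unfolding r using d k v ac True by (auto simp: fun_eq_iff)
      ultimately show ?thesis using Reach_fix[OF R] by metis
    next
      case False
      have "Reach k ?r id (?r(b := k - 1 - ?r b, c := k - 1 - ?r c))" by (rule Reach_N) (use d in auto)
      moreover have "?r(b := k - 1 - ?r b, c := k - 1 - ?r c) = p"
        unfolding r using d k v ac False by (auto simp: fun_eq_iff)
      ultimately show ?thesis using Reach_fix[OF R] by metis
    qed
  qed
qed

lemma swap_invisible:
  assumes d: "a \<noteq> b" "z \<noteq> a" "z \<noteq> b" and k: "k \<ge> 2"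
    and v: "p a = 0 \<or> p a = k - 1" "p b = 0 \<or> p b = k - 1" and z: "k - 1 - p z = p z"
  shows "Reach k p (Transposition.transpose a b) p"
proof -
  let ?r = "psi k a b p"
  have R: "Reach k p (Transposition.transpose a b) ?r" by (rule Reach_psi) (use d in auto)
  have r: "?r = p(a := k - 1 - p b, b := p a)"
    using d by (auto simp: psi_def fun_eq_iff)
  show ?thesis
  proof (cases "p a = p b")
    case True
    have "Reach k ?r id (?r(a := k - 1 - ?r a, z := k - 1 - ?r z))" by (rule Reach_N) (use d in auto)
    moreover have "?r(a := k - 1 - ?r a, z := k - 1 - ?r z) = p"
      unfolding r using d k v z True by (auto simp: fun_eq_iff)
    ultimately show ?thesis using Reach_fix[OF R] by metis
  next
    case False
    have "Reach k ?r id (?r(b := k - 1 - ?r b, z := k - 1 - ?r z))" by (rule Reach_N) (use d in auto)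
    moreover have "?r(b := k - 1 - ?r b, z := k - 1 - ?r z) = p"
      unfolding r using d k v z False by (auto simp: fun_eq_iff)
    ultimately show ?thesis using Reach_fix[OF R] by metis
  qed
qed

lemma swap_pair:
  assumes d: "a \<noteq> b" "c \<noteq> d" "c \<noteq> a" "c \<noteq> b" "d \<noteq> a" "d \<noteq> b" and k: "k \<ge> 2"
    and v: "p a = 0 \<or> p a = k - 1" "p b = 0 \<or> p b = k - 1"
    and cd: "p c = p d \<or> p c = k - 1 - p d" "p c < k" "p d < k" and nz: "k - 1 - p c \<noteq> p c"
  shows "Reach k p (Transposition.transpose c d \<circ> Transposition.transpose a b) p"
proof -
  let ?r = "psi k c d (psi k a b p)"
  have R: "Reach k p (Transposition.transpose c d \<circ> Transposition.transpose a b) ?r"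
    by (rule Reach_trans[OF Reach_psi Reach_psi]) (use d in auto)
  have r: "?r = p(a := k - 1 - p b, b := p a, c := k - 1 - p d, d := p c)"
    using d by (auto simp: psi_def fun_eq_iff)
  define x where "x = (if p a = p b then a else b)"
  define y where "y = (if p c = p d then c else d)"
  have xy: "x \<noteq> y" using d by (auto simp: x_def y_def)
  have "Reach k ?r id (?r(x := k - 1 - ?r x, y := k - 1 - ?r y))" by (rule Reach_N[OF xy])
  moreover have "?r(x := k - 1 - ?r x, y := k - 1 - ?r y) = p"
    unfolding r x_def y_def using d k v cd nz by (auto simp: fun_eq_iff)
  ultimately show ?thesis using Reach_fix[OF R] by metis
qed


definition Good :: "nat \<Rightarrow> ('n \<Rightarrow> nat) \<Rightarrow> ('n \<Rightarrow> 'n) \<Rightarrow> bool" where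
  "Good k p \<sigma> \<longleftrightarrow> (\<exists>\<tau>. Reach k p \<tau> p \<and> (\<forall>l\<in>Bset k p. \<tau> l = \<sigma> l))"

lemma Good_id: "Good k p id"
  unfolding Good_def using Reach_id by (metis id_apply)

lemma Good_comp:
  assumes "Good k p \<sigma>1" "\<sigma>1 permutes Bset k p" "Good k p \<sigma>2"
  shows "Good k p (\<sigma>2 \<circ> \<sigma>1)"
proof -
  obtain \<tau>1 where 1: "Reach k p \<tau>1 p" "\<forall>l\<in>Bset k p. \<tau>1 l = \<sigma>1 l" using assms(1) unfolding Good_def by blast
  obtain \<tau>2 where 2: "Reach k p \<tau>2 p" "\<forall>l\<in>Bset k p. \<tau>2 l = \<sigma>2 l" using assms(3) unfolding Good_def by blast
  have "Reach k p (\<tau>2 \<circ> \<tau>1) p" using Reach_trans[OF 1(1) 2(1)] .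
  moreover have "\<forall>l\<in>Bset k p. (\<tau>2 \<circ> \<tau>1) l = (\<sigma>2 \<circ> \<sigma>1) l"
    using 1(2) 2(2) permutes_in_image[OF assms(2)] by auto
  ultimately show ?thesis unfolding Good_def by blast
qed

lemma Good_Gbar:
  assumes "Good k p \<sigma>" "\<sigma> permutes Bset k p" "\<forall>i. p i < k"
  shows "\<sigma> \<in> Gbar_rot k p"
proof -
  obtain \<tau> where t: "Reach k p \<tau> p" "\<forall>l\<in>Bset k p. \<tau> l = \<sigma> l" using assms(1) unfolding Good_def by blast
  obtain ws where ws: "\<forall>ij\<in>set ws. fst ij \<noteq> snd ij" "wpos k ws p = p" "\<forall>l. wlab ws l = \<tau> l"
    using t(1) unfolding Reach_def by blast
  obtain ms where ms: "\<forall>mv\<in>set ms. valid_move k mv" "comb_pos k ms p = wpos k ws p"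
     "\<forall>l. comb_X k ms (p, l) = (wpos k ws p, wlab ws l)"
    using word_moves[OF ws(1) assms(3)] by blast
  have "comb_pos k ms p = p" using ms(2) ws(2) by simp
  moreover have "\<forall>l\<in>Bset k p. comb_X k ms (p, l) = (p, \<sigma> l)" using ms(3) ws(2,3) t(2) by simp
  ultimately show ?thesis unfolding Gbar_rot_def using assms(2) ms(1) by blast
qed

lemma Bval: "i \<in> Bset k p \<Longrightarrow> p i = 0 \<or> p i = k - 1"
  by (simp add: Bset_def)

lemma Good3:
  assumes "x \<in> Bset k p" "y \<in> Bset k p" "z \<in> Bset k p" "x \<noteq> y" "y \<noteq> z" "x \<noteq> z" "k \<ge> 2"
  shows "Good k p (Transposition.transpose y z \<circ> Transposition.transpose x y)"
  unfolding Good_def using three_cycle[OF assms(4,5,6,7) Bval[OF assms(1)] Bval[OF assms(2)] Bval[OF assms(3)]]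
  by blast

lemma GoodDT:
  assumes B: "a \<in> Bset k p" "b \<in> Bset k p" "c \<in> Bset k p" "d \<in> Bset k p" and ne: "a \<noteq> b" "c \<noteq> d"
    and k: "k \<ge> 2"
  shows "Good k p (Transposition.transpose a b \<circ> Transposition.transpose c d)"
proof -
  let ?t = "Transposition.transpose"
  consider "a = c \<and> b = d" | "a = d \<and> b = c" | "a = c \<and> b \<noteq> d" | "a = d \<and> b \<noteq> c"
    | "b = c \<and> a \<noteq> d" | "b = d \<and> a \<noteq> c" | "a \<noteq> c \<and> a \<noteq> d \<and> b \<noteq> c \<and> b \<noteq> d" by blast
  then show ?thesis
  proof cases
    case 1 then show ?thesis using Good_id by simp
  next
    case 2 then show ?thesis using Good_id by (simp add: transpose_commute)
  next
    case 3
    have "Good k p (?t a b \<circ> ?t d a)" by (rule Good3) (use B ne 3 k in auto)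
    then show ?thesis using 3 by (simp add: transpose_commute)
  next
    case 4
    have "Good k p (?t a b \<circ> ?t c a)" by (rule Good3) (use B ne 4 k in auto)
    then show ?thesis using 4 by (simp add: transpose_commute)
  next
    case 5
    have "Good k p (?t b a \<circ> ?t d b)" by (rule Good3) (use B ne 5 k in auto)
    then show ?thesis using 5 by (simp add: transpose_commute)
  next
    case 6
    have "Good k p (?t b a \<circ> ?t c b)" by (rule Good3) (use B ne 6 k in auto)
    then show ?thesis using 6 by (simp add: transpose_commute)
  next
    case 7
    have g1: "Good k p (?t c b \<circ> ?t d c)" by (rule Good3) (use B ne 7 k in auto)
    have g2: "Good k p (?t b a \<circ> ?t c b)" by (rule Good3) (use B ne 7 k in auto)
    have pm: "?t c b \<circ> ?t d c permutes Bset k p"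
      using B by (simp add: permutes_compose permutes_swap_id)
    have "Good k p ((?t b a \<circ> ?t c b) \<circ> (?t c b \<circ> ?t d c))" by (rule Good_comp[OF g1 pm g2])
    moreover have "(?t b a \<circ> ?t c b) \<circ> (?t c b \<circ> ?t d c) = ?t a b \<circ> ?t c d"
      by (rule ext) (simp add: transpose_commute)
    ultimately show ?thesis by simp
  qed
qed

lemma parity_induct:
  fixes p :: "'n::finite \<Rightarrow> nat"
  assumes t0: "a0 \<in> Bset k p" "b0 \<in> Bset k p" "a0 \<noteq> b0" and k: "k \<ge> 2"
    and pm: "\<sigma> permutes Bset k p"
  shows "(evenperm \<sigma> \<longrightarrow> Good k p \<sigma>) \<and> (\<not> evenperm \<sigma> \<longrightarrow> Good k p (Transposition.transpose a0 b0 \<circ> \<sigma>))"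
  using pm finite[of "Bset k p"]
proof (induction rule: permutes_induct)
  case id
  then show ?case using Good_id[of k p] by (simp add: id_def)
next
  case (swap a b \<sigma>)
  let ?t = "Transposition.transpose"
  have perm: "permutation \<sigma>" by (rule permutes_imp_permutation[OF finite swap.hyps(4)])
  have ev: "evenperm (?t a b \<circ> \<sigma>) = (\<not> evenperm \<sigma>)"
    using evenperm_comp[OF permutation_swap_id perm, of a b] evenperm_swap[of a b] swap.hyps(3) by simp
  show ?case
  proof (cases "evenperm \<sigma>")
    case True
    have g: "Good k p \<sigma>" using swap.IH True by blast
    have "Good k p ((?t a0 b0 \<circ> ?t a b) \<circ> \<sigma>)"
      by (rule Good_comp[OF g swap.hyps(4) GoodDT]) (use t0 swap.hyps k in auto)
    then have "Good k p (?t a0 b0 \<circ> (?t a b \<circ> \<sigma>))" by (simp only: comp_assoc)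
    with ev True show ?thesis by blast
  next
    case False
    have g: "Good k p (?t a0 b0 \<circ> \<sigma>)" using swap.IH False by blast
    have pm2: "?t a0 b0 \<circ> \<sigma> permutes Bset k p"
      using t0 swap.hyps(4) by (simp add: permutes_compose permutes_swap_id)
    have "Good k p ((?t a b \<circ> ?t a0 b0) \<circ> (?t a0 b0 \<circ> \<sigma>))"
      by (rule Good_comp[OF g pm2 GoodDT]) (use t0 swap.hyps k in auto)
    moreover have "(?t a b \<circ> ?t a0 b0) \<circ> (?t a0 b0 \<circ> \<sigma>) = ?t a b \<circ> \<sigma>"
      by (rule ext) simp
    ultimately have "Good k p (?t a b \<circ> \<sigma>)" by simp
    with ev False show ?thesis by blast
  qed
qed


lemma card_flip_parity:
  assumes "finite E1"
  shows "even (card (if j \<in> E1 then E1 - {j} else insert j E1)) \<longleftrightarrow> \<not> even (card E1)"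
  using assms by (cases "j \<in> E1") (auto simp: card_Diff_singleton card_insert_if dest: card_gt_0_iff[THEN iffD2, rotated])

lemma comb_inv:
  fixes q :: "'n::finite \<Rightarrow> nat"
  assumes "\<forall>mv\<in>set ms. valid_move k mv" "\<forall>i. q i < k"
  shows "\<exists>\<pi>. \<pi> permutes UNIV \<and> (\<forall>l. comb_X k ms (q,l) = (comb_pos k ms q, \<pi> l)) \<and>
     (\<exists>\<epsilon>. (\<forall>u. comb_pos k ms q (\<pi> u) = (if \<epsilon> u then k - 1 - q u else q u)) \<and>
          (evenperm \<pi> \<longleftrightarrow> even (card {u. \<epsilon> u})))"
  using assms
proof (induction ms arbitrary: q)
  case Nil
  show ?case
    apply (rule exI[of _ id])
    apply (intro conjI)
      apply (simp add: permutes_def)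
     apply simp
    apply (rule exI[of _ "\<lambda>_. False"])
    by (simp add: evenperm_id)
next
  case (Cons mv ms)
  obtain i j c where mv: "mv = (i, j, c)" by (cases mv) auto
  have ij: "i \<noteq> j" using Cons.prems(1) mv by (auto simp: valid_move_def)
  have vm: "\<forall>mv\<in>set ms. valid_move k mv" using Cons.prems(1) by auto
  show ?case
  proof (cases "in_layer mv q")
    case False
    have "move_pos k mv q = q" using False mv by (simp add: move_pos_def)
    moreover have "\<forall>l. move_X k mv (q, l) = (q, l)" using False mv by (simp add: move_X_def)
    ultimately show ?thesis using Cons.IH[OF vm Cons.prems(2)] by simp
  next
    case True
    let ?t = "Transposition.transpose i j"
    define q1 where "q1 = psi k i j q"
    have mp: "move_pos k mv q = q1" using True mv by (simp add: move_pos_def q1_def)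
    have mx: "\<forall>l. move_X k mv (q, l) = (q1, ?t l)" using True mv by (simp add: move_X_def q1_def)
    have q1k: "\<forall>i. q1 i < k" unfolding q1_def using psi_lt[OF Cons.prems(2)] by blast
    obtain \<pi>1 \<epsilon>1 where h: "\<pi>1 permutes UNIV" "\<forall>l. comb_X k ms (q1,l) = (comb_pos k ms q1, \<pi>1 l)"
      "\<forall>u. comb_pos k ms q1 (\<pi>1 u) = (if \<epsilon>1 u then k - 1 - q1 u else q1 u)"
      "evenperm \<pi>1 \<longleftrightarrow> even (card {u. \<epsilon>1 u})"
      using Cons.IH[OF vm q1k] by blast
    define \<epsilon> where "\<epsilon> u = (if u = j then \<not> \<epsilon>1 (?t u) else \<epsilon>1 (?t u))" for u
    have cp: "comb_pos k (mv # ms) q = comb_pos k ms q1" using mp by simp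
    have 1: "\<pi>1 \<circ> ?t permutes UNIV" using h(1) by (simp add: permutes_compose permutes_swap_id)
    have 2: "\<forall>l. comb_X k (mv # ms) (q,l) = (comb_pos k (mv # ms) q, (\<pi>1 \<circ> ?t) l)"
      using mx h(2) cp by simp
    have 3: "comb_pos k (mv # ms) q ((\<pi>1 \<circ> ?t) u) = (if \<epsilon> u then k - 1 - q u else q u)" for u
    proof -
      have e: "comb_pos k (mv # ms) q ((\<pi>1 \<circ> ?t) u) = (if \<epsilon>1 (?t u) then k - 1 - q1 (?t u) else q1 (?t u))"
        using cp h(3) by simp
      have qj: "q j < k" "q i < k" using Cons.prems(2) by auto
      show ?thesis unfolding e \<epsilon>_def q1_def using ij qj
        by (cases "u = i"; cases "u = j") (auto simp: psi_def)
    qed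
    have E: "{u. \<epsilon> u} = (let E1 = {u. \<epsilon>1 (?t u)} in if j \<in> E1 then E1 - {j} else insert j E1)"
      by (auto simp: \<epsilon>_def Let_def)
    have cE1: "card {u. \<epsilon>1 (?t u)} = card {u. \<epsilon>1 u}"
    proof -
      have "{u. \<epsilon>1 (?t u)} = ?t ` {u. \<epsilon>1 u}"
        by (auto simp: image_iff) (metis transpose_involutory)
      moreover have "inj ?t" by (meson inj_onI transpose_eq_imp_eq)
      ultimately show ?thesis by (simp add: card_image inj_on_subset)
    qed
    have 4: "evenperm (\<pi>1 \<circ> ?t) \<longleftrightarrow> even (card {u. \<epsilon> u})"
    proof -
      have "evenperm (\<pi>1 \<circ> ?t) \<longleftrightarrow> \<not> evenperm \<pi>1"
        using evenperm_comp[OF permutes_imp_permutation[OF finite h(1)] permutation_swap_id, of i j]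
          evenperm_swap[of i j] ij by simp
      also have "\<dots> \<longleftrightarrow> \<not> even (card {u. \<epsilon>1 (?t u)})" using h(4) cE1 by simp
      also have "\<dots> \<longleftrightarrow> even (card {u. \<epsilon> u})"
        unfolding E Let_def by (rule card_flip_parity[symmetric]) simp
      finally show ?thesis .
    qed
    show ?thesis using 1 2 3 4 by blast
  qed
qed

lemma parity_sym:
  fixes g :: "'n \<Rightarrow> bool"
  assumes pm: "\<sigma> permutes B" and fin: "finite B"
  shows "even (card {u\<in>B. g (\<sigma> u) \<noteq> g u})"
proof -
  define A where "A = {u\<in>B. g u}"
  define A2 where "A2 = {u\<in>B. g (\<sigma> u)}"
  have inj: "inj_on \<sigma> A2" using permutes_inj[OF pm] by (simp add: inj_on_def inj_def)
  have img: "\<sigma> ` A2 = A"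
  proof
    show "\<sigma> ` A2 \<subseteq> A" unfolding A_def A2_def using permutes_in_image[OF pm] by auto
    show "A \<subseteq> \<sigma> ` A2"
    proof
      fix x assume x: "x \<in> A"
      obtain y where "\<sigma> y = x" using permutes_surj[OF pm] by (metis surjD)
      moreover have "y \<in> B" using x calculation pm unfolding A_def
        by (metis (mono_tags, lifting) mem_Collect_eq permutes_in_image)
      ultimately show "x \<in> \<sigma> ` A2" using x unfolding A_def A2_def by auto
    qed
  qed
  have cA: "card A2 = card A" using card_image[OF inj] img by simp
  have fA: "finite A" "finite A2" using fin by (auto simp: A_def A2_def)
  have X: "{u\<in>B. g (\<sigma> u) \<noteq> g u} = (A - A2) \<union> (A2 - A)" by (auto simp: A_def A2_def)
  have "card ((A - A2) \<union> (A2 - A)) = card (A - A2) + card (A2 - A)"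
    by (rule card_Un_disjoint) (use fA in auto)
  also have "\<dots> = (card A - card (A \<inter> A2)) + (card A2 - card (A2 \<inter> A))"
    using fA by (simp add: card_Diff_subset_Int Diff_Int2 card_Diff_subset)
  also have "\<dots> = 2 * (card A - card (A \<inter> A2))" using cA by (simp add: Int_commute)
  finally show ?thesis using X by simp
qed

lemma Gbar_upper:
  fixes p :: "'n::finite \<Rightarrow> nat"
  assumes k: "k \<ge> 2" and pk: "\<forall>i. p i < k" and s: "\<sigma> \<in> Gbar_rot k p"
    and H: "\<forall>u. u \<notin> Bset k p \<longrightarrow> (\<forall>v. v \<notin> Bset k p \<longrightarrow> bar k (p u) = bar k (p v) \<longrightarrow> u = v) \<and> 2 * p u \<noteq> k - 1"
  shows "evenperm \<sigma>"
proof -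
  let ?B = "Bset k p"
  obtain ms where ms: "\<sigma> permutes ?B" "\<forall>mv\<in>set ms. valid_move k mv" "comb_pos k ms p = p"
     "\<forall>l\<in>?B. comb_X k ms (p, l) = (p, \<sigma> l)"
    using s unfolding Gbar_rot_def by blast
  obtain \<pi> \<epsilon> where h: "\<pi> permutes UNIV" "\<forall>l. comb_X k ms (p,l) = (comb_pos k ms p, \<pi> l)"
      "\<forall>u. comb_pos k ms p (\<pi> u) = (if \<epsilon> u then k - 1 - p u else p u)"
      "evenperm \<pi> \<longleftrightarrow> even (card {u. \<epsilon> u})"
    using comb_inv[OF ms(2) pk] by blast
  have pe: "p (\<pi> u) = (if \<epsilon> u then k - 1 - p u else p u)" for u using h(3) ms(3) by simp
  have onB: "\<pi> l = \<sigma> l" if "l \<in> ?B" for l using h(2) ms(3,4) that by auto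
  have offB: "\<pi> u = u \<and> \<not> \<epsilon> u" if u: "u \<notin> ?B" for u
  proof -
    have pu: "p u \<noteq> 0" "p u \<noteq> k - 1" "p u < k" using u pk by (auto simp: Bset_def)
    have v: "\<pi> u \<notin> ?B" using pe[of u] pu by (auto simp: Bset_def split: if_splits)
    have "bar k (p (\<pi> u)) = bar k (p u)" using pe[of u] pu by (auto simp: bar_def)
    then have "\<pi> u = u" using H u v by metis
    moreover have "\<not> \<epsilon> u" using pe[of u] calculation H u pu by auto
    ultimately show ?thesis by blast
  qed
  have pis: "\<pi> = \<sigma>"
  proof
    fix l show "\<pi> l = \<sigma> l"
      using onB offB permutes_not_in[OF ms(1)] by (cases "l \<in> ?B") auto
  qed
  have "{u. \<epsilon> u} = {u\<in>?B. (p (\<sigma> u) = 0) \<noteq> (p u = 0)}"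
  proof (rule set_eqI)
    fix u
    show "u \<in> {u. \<epsilon> u} \<longleftrightarrow> u \<in> {u\<in>?B. (p (\<sigma> u) = 0) \<noteq> (p u = 0)}"
    proof (cases "u \<in> ?B")
      case True
      then have "p u = 0 \<or> p u = k - 1" by (simp add: Bset_def)
      then show ?thesis using pe[of u] pis True k by auto
    next
      case False
      then show ?thesis using offB by auto
    qed
  qed
  then have "even (card {u. \<epsilon> u})" using parity_sym[OF ms(1) finite, of "\<lambda>u. p u = 0"] by simp
  then show ?thesis using h(4) pis by simp
qed


lemma bar_mid: "x < k \<Longrightarrow> real (bar k x) < (real k - 1) / 2 \<Longrightarrow> 2 * x \<noteq> k - 1"
  by (auto simp: bar_def min_def split: if_splits)

lemma jlist_facts:
  fixes p :: "'n::finite \<Rightarrow> nat"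
  shows "mset (jlist k p) = image_mset (\<lambda>i. bar k (p i)) (mset_set (- Bset k p))"
    "sorted (jlist k p)" "set (jlist k p) = (\<lambda>i. bar k (p i)) ` (- Bset k p)"
  unfolding jlist_def by auto

lemma jlist_count:
  fixes p :: "'n::finite \<Rightarrow> nat"
  shows "count (mset (jlist k p)) v = card {a \<in> - Bset k p. bar k (p a) = v}"
  unfolding jlist_facts(1) by (rule count_image_mset_eq_card_vimage) simp

lemma jlist_J2:
  fixes p :: "'n::finite \<Rightarrow> nat"
  assumes pk: "\<forall>i. p i < k" and cB: "card (Bset k p) < CARD('n)"
    and st: "\<forall>r. Suc r < length (jlist k p) \<longrightarrow> jlist k p ! r < jlist k p ! Suc r"
    and lt: "real (last (jlist k p)) < (real k - 1) / 2"
  shows "\<forall>u. u \<notin> Bset k p \<longrightarrow> (\<forall>v. v \<notin> Bset k p \<longrightarrow> bar k (p u) = bar k (p v) \<longrightarrow> u = v) \<and> 2 * p u \<noteq> k - 1"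
proof (intro allI impI conjI)
  let ?J = "jlist k p"
  have sw: "sorted_wrt (<) ?J"
    using st by (subst sorted_wrt_iff_nth_Suc_transp) (auto simp: transp_def)
  then have dist: "distinct ?J" by (simp add: strict_sorted_iff)
  fix u assume u: "u \<notin> Bset k p"
  {
    fix v assume v: "v \<notin> Bset k p" and e: "bar k (p u) = bar k (p v)"
    show "u = v"
    proof (rule ccontr)
      assume "u \<noteq> v"
      then have "{u, v} \<subseteq> {a \<in> - Bset k p. bar k (p a) = bar k (p u)}" using u v e by auto
      then have "card {u, v} \<le> card {a \<in> - Bset k p. bar k (p a) = bar k (p u)}"
        by (intro card_mono) auto
      then have "2 \<le> count (mset ?J) (bar k (p u))" using \<open>u \<noteq> v\<close> by (subst jlist_count) simp
      moreover have "count (mset ?J) (bar k (p u)) \<le> 1"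
        using dist distinct_count_atmost_1 by (metis order.refl zero_le_one)
      ultimately show False by simp
    qed
  }
  have inset: "bar k (p u) \<in> set ?J" using jlist_facts(3) u by auto
  then obtain i where i: "i < length ?J" "?J ! i = bar k (p u)" by (metis in_set_conv_nth)
  have ne: "?J \<noteq> []" using inset by auto
  have "?J ! i \<le> ?J ! (length ?J - 1)"
    using i(1) jlist_facts(2) by (intro sorted_nth_mono) auto
  then have "bar k (p u) \<le> last ?J" using i ne by (simp add: last_conv_nth)
  then have "real (bar k (p u)) < (real k - 1) / 2" using lt by linarith
  then show "2 * p u \<noteq> k - 1" using bar_mid pk by blast
qed

lemma jlist_J3:
  fixes p :: "'n::finite \<Rightarrow> nat"
  assumes pk: "\<forall>i. p i < k" and cB: "card (Bset k p) < CARD('n)"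
    and eq: "real (last (jlist k p)) = (real k - 1) / 2"
  shows "\<exists>z. z \<notin> Bset k p \<and> k - 1 - p z = p z"
proof -
  have "- Bset k p \<noteq> {}"
  proof
    assume "- Bset k p = {}"
    then have "Bset k p = UNIV" by (metis Compl_empty_eq double_compl)
    with cB show False by simp
  qed
  then have ne: "jlist k p \<noteq> []" using jlist_facts(3)[of k p] by auto
  then have "last (jlist k p) \<in> set (jlist k p)" by simp
  then obtain z where z: "z \<notin> Bset k p" "last (jlist k p) = bar k (p z)" unfolding jlist_facts(3)[of k p] by auto
  have "k - 1 - p z = p z" using eq z(2) pk[rule_format, of z]
    by (auto simp: bar_def min_def split: if_splits)
  then show ?thesis using z by blast
qed

lemma jlist_J4:
  fixes p :: "'n::finite \<Rightarrow> nat"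
  assumes pk: "\<forall>i. p i < k"
    and ex: "\<exists>r. Suc r < length (jlist k p) \<and> jlist k p ! r = jlist k p ! Suc r \<and>
               real (jlist k p ! r) < (real k - 1) / 2"
  shows "\<exists>c d. c \<noteq> d \<and> c \<notin> Bset k p \<and> d \<notin> Bset k p \<and> (p c = p d \<or> p c = k - 1 - p d) \<and> k - 1 - p c \<noteq> p c"
proof -
  let ?J = "jlist k p"
  obtain r where r: "Suc r < length ?J" "?J ! r = ?J ! Suc r" "real (?J ! r) < (real k - 1) / 2"
    using ex by blast
  let ?v = "?J ! r"
  have "{r, Suc r} \<subseteq> {i. i < length ?J \<and> ?v = ?J ! i}" using r by auto
  then have "card {r, Suc r} \<le> card {i. i < length ?J \<and> ?v = ?J ! i}" by (intro card_mono) auto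
  then have "2 \<le> count (mset ?J) ?v"
    by (simp add: count_mset count_list_eq_length_filter length_filter_conv_card)
  then have c2: "2 \<le> card {a \<in> - Bset k p. bar k (p a) = ?v}" using jlist_count by metis
  then obtain c where c: "c \<in> {a \<in> - Bset k p. bar k (p a) = ?v}"
    by (metis card.empty ex_in_conv not_numeral_le_zero)
  have "card ({a \<in> - Bset k p. bar k (p a) = ?v} - {c}) \<ge> 1" using c2 c by (simp add: card_Diff_singleton)
  then obtain d where d: "d \<in> {a \<in> - Bset k p. bar k (p a) = ?v} - {c}"
    by (metis card.empty ex_in_conv not_one_le_zero)
  have pc: "p c < k" "p d < k" using pk by auto
  have e: "bar k (p c) = bar k (p d)" using c d by auto
  have "p c = p d \<or> p c = k - 1 - p d" using e pc by (auto simp: bar_def min_def split: if_splits)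
  moreover have "2 * p c \<noteq> k - 1" using bar_mid[of "p c" k] pc c r(3) by auto
  ultimately show ?thesis using c d by (intro exI[of _ c] exI[of _ d]) auto
qed


definition ctr :: "('n \<Rightarrow> nat) \<Rightarrow> 'n \<Rightarrow> real" where "ctr p i = real (p i) + 1/2"
definition tt :: "('n \<Rightarrow> nat) \<Rightarrow> 'n \<Rightarrow> real" where "tt p i = (if p i = 0 then -1 else 1)"

lemma tt_sq [simp]: "tt p i * tt p i = 1" by (simp add: tt_def)
lemma abs_tt [simp]: "\<bar>tt p i\<bar> = 1" by (simp add: tt_def)

lemma cubie_iff: "x \<in> cubie p \<longleftrightarrow> (\<forall>i. \<bar>x $ i - ctr p i\<bar> \<le> 1/2)"
proof -
  have "(real (p i) \<le> x $ i \<and> x $ i \<le> real (p i) + 1) \<longleftrightarrow> \<bar>x $ i - ctr p i\<bar> \<le> 1/2" for i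
    unfolding ctr_def by linarith
  then show ?thesis by (simp add: cubie_def)
qed

lemma face_iff:
  assumes "k \<ge> 1"
  shows "x \<in> orient_face k p l \<longleftrightarrow> x \<in> cubie p \<and> (\<forall>s\<in>Bset k p - {l}. x $ s = ctr p s + tt p s / 2)"
proof -
  have "(if p s = 0 then 0 else real k) = ctr p s + tt p s / 2" if "s \<in> Bset k p" for s
    using that assms by (auto simp: Bset_def ctr_def tt_def of_nat_diff)
  then show ?thesis unfolding orient_face_def by auto
qed

lemma det_signed_perm:
  fixes \<delta> :: "'n::finite \<Rightarrow> real"
  assumes "\<sigma> permutes (UNIV :: 'n set)"
  shows "det (\<chi> i j. if i = \<sigma> j then \<delta> i else 0) = of_int (sign \<sigma>) * prod \<delta> UNIV"
proof -
  define D :: "real^'n^'n" where "D = (\<chi> i j. if i = j then \<delta> i else 0)"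
  have "(\<chi> i j. if i = \<sigma> j then \<delta> i else 0) = (\<chi> i j. D $ i $ \<sigma> j)" by (simp add: D_def)
  then have "det (\<chi> i j. if i = \<sigma> j then \<delta> i else 0) = of_int (sign \<sigma>) * det D"
    using det_permute_columns[OF assms, of D] by simp
  moreover have "det D = prod \<delta> UNIV" by (subst det_diagonal) (auto simp: D_def)
  ultimately show ?thesis by simp
qed

lemma image_eqI_inv:
  assumes "\<And>x. x \<in> S \<Longrightarrow> f x \<in> T" "\<And>y. y \<in> T \<Longrightarrow> g y \<in> S \<and> f (g y) = y"
  shows "f ` S = T"
  using assms by (auto intro: image_eqI[of _ f, OF sym])

lemma norm_axis_real: "norm (axis m (a::real)) = \<bar>a\<bar>"
proof -
  have "axis m a = a *\<^sub>R axis m 1" by (simp add: axis_def vec_eq_iff)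
  then show ?thesis by simp
qed


lemma Grot_lower:
  fixes p :: "'n::finite \<Rightarrow> nat" and e :: real
  assumes k: "k \<ge> 2" and pm: "\<sigma> permutes Bset k p" and e: "\<bar>e\<bar> = 1"
    and d1: "of_int (sign \<sigma>) * (if u0 \<notin> Bset k p then e else 1) = (1::real)"
  shows "\<sigma> \<in> G_rot k p"
proof -
  define B where "B = Bset k p"
  define \<tau> where "\<tau> = inv \<sigma>"
  have pmB: "\<sigma> permutes B" using pm B_def by simp
  have pmU: "\<sigma> permutes UNIV" using permutes_subset[OF pmB] by simp
  have tB: "\<tau> permutes B" unfolding \<tau>_def using permutes_inv[OF pmB] .
  have tU: "\<tau> permutes UNIV" using permutes_subset[OF tB] by simp
  have st [simp]: "\<sigma> (\<tau> i) = i" "\<tau> (\<sigma> i) = i" for i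
    unfolding \<tau>_def using permutes_inverses[OF pmB] by auto
  have tinB: "\<tau> i \<in> B \<longleftrightarrow> i \<in> B" for i
    using permutes_in_image[OF tB] by simp
  have sinB: "\<sigma> i \<in> B \<longleftrightarrow> i \<in> B" for i
    using permutes_in_image[OF pmB] by simp
  define ta where "ta i = (if i \<in> B then tt p i else 1)" for i
  define \<delta> where "\<delta> i = ta i * ta (\<tau> i) * (if i = u0 \<and> u0 \<notin> B then e else 1)" for i
  have dabs: "\<bar>\<delta> i\<bar> = 1" for i using e by (auto simp: \<delta>_def ta_def abs_mult)
  have dsq [simp]: "\<delta> i * \<delta> i = 1" for i
    using abs_mult_self_eq[of "\<delta> i"] dabs[of i] by simp
  have dB: "\<delta> s = tt p s * tt p (\<tau> s)" if "s \<in> B" for s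
    using that tinB by (auto simp: \<delta>_def ta_def)
  define f where "f x = (\<chi> i. ctr p i + \<delta> i * (x $ \<tau> i - ctr p (\<tau> i)))" for x :: "real^'n"
  define g where "g y = (\<chi> j. ctr p j + \<delta> (\<sigma> j) * (y $ \<sigma> j - ctr p (\<sigma> j)))" for y :: "real^'n"
  have fg: "f (g y) = y" for y
  proof -
    have "ctr p i + \<delta> i * (\<delta> i * (y $ i - ctr p i)) = y $ i" for i
      using dsq[of i] by (simp add: mult.assoc[symmetric])
    then show ?thesis by (simp add: f_def g_def vec_eq_iff)
  qed
  have iso: "\<forall>x y. dist (f x) (f y) = dist x y"
  proof (intro allI)
    fix x y :: "real^'n"
    have "dist (f x $ i) (f y $ i) = dist (x $ \<tau> i) (y $ \<tau> i)" for i
      by (simp add: f_def dist_real_def dabs abs_mult flip: right_diff_distrib)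
    then have "dist (f x) (f y) = L2_set (\<lambda>i. dist (x $ \<tau> i) (y $ \<tau> i)) UNIV"
      by (simp add: dist_vec_def)
    also have "\<dots> = L2_set (\<lambda>i. dist (x $ i) (y $ i)) UNIV"
      unfolding L2_set_def using sum.permute[OF tU, of "\<lambda>i. (dist (x $ i) (y $ i))\<^sup>2"]
      by (simp add: comp_def)
    finally show "dist (f x) (f y) = dist x y" by (simp add: dist_vec_def)
  qed
  have lin: "(\<lambda>x. f x - f 0) = (\<lambda>x. \<chi> i. \<delta> i * x $ \<tau> i)"
    by (rule ext) (simp add: f_def vec_eq_iff algebra_simps)
  have mat: "matrix (\<lambda>x. f x - f 0) = (\<chi> i j. if i = \<sigma> j then \<delta> i else 0)"
  proof -
    have "(\<tau> i = j) \<longleftrightarrow> (i = \<sigma> j)" for i j by auto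
    then show ?thesis unfolding lin by (simp add: matrix_def axis_def vec_eq_iff)
  qed
  have prodd: "prod \<delta> UNIV = (if u0 \<notin> B then e else 1)"
  proof -
    have "prod \<delta> UNIV = prod ta UNIV * prod (ta \<circ> \<tau>) UNIV * prod (\<lambda>i. if i = u0 \<and> u0 \<notin> B then e else 1) UNIV"
      unfolding \<delta>_def by (simp add: prod.distrib comp_def)
    also have "prod (ta \<circ> \<tau>) UNIV = prod ta UNIV" using prod.permute[OF tU, of ta] by simp
    also have "prod ta UNIV * prod ta UNIV = 1"
    proof -
      have "prod ta UNIV * prod ta UNIV = prod (\<lambda>i. ta i * ta i) UNIV" by (simp add: prod.distrib)
      also have "\<dots> = 1" by (rule prod.neutral) (auto simp: ta_def)
      finally show ?thesis .
    qed
    also have "prod (\<lambda>i. if i = u0 \<and> u0 \<notin> B then e else 1) UNIV = (if u0 \<notin> B then e else 1)"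
      by (cases "u0 \<in> B") auto
    finally show ?thesis by simp
  qed
  have det: "det (matrix (\<lambda>x. f x - f 0)) = 1"
    unfolding mat det_signed_perm[OF pmU] prodd using d1 B_def by simp
  have fc: "f x \<in> cubie p" if "x \<in> cubie p" for x
    using that unfolding cubie_iff by (auto simp: f_def abs_mult dabs)
  have gc: "g y \<in> cubie p" if "y \<in> cubie p" for y
    using that unfolding cubie_iff by (auto simp: g_def abs_mult dabs)
  have cub: "f ` cubie p = cubie p" by (rule image_eqI_inv[where g = g, OF fc]) (use gc fg in blast)+
  have k1: "k \<ge> 1" using k by simp
  have face: "f ` orient_face k p l = orient_face k p (\<sigma> l)" if l: "l \<in> B" for l
  proof (rule image_eqI_inv[where g = g])
    fix x assume x: "x \<in> orient_face k p l"
    have "f x $ s = ctr p s + tt p s / 2" if s: "s \<in> Bset k p - {\<sigma> l}" for s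
    proof -
      have "\<tau> s \<in> Bset k p - {l}" using s tinB B_def by auto
      then have "x $ \<tau> s = ctr p (\<tau> s) + tt p (\<tau> s) / 2" using x unfolding face_iff[OF k1] by blast
      moreover have "\<delta> s = tt p s * tt p (\<tau> s)" using dB s B_def by auto
      ultimately show ?thesis by (simp add: f_def tt_def)
    qed
    moreover have "f x \<in> cubie p" using fc x unfolding face_iff[OF k1] by blast
    ultimately show "f x \<in> orient_face k p (\<sigma> l)" unfolding face_iff[OF k1] by blast
  next
    fix y assume y: "y \<in> orient_face k p (\<sigma> l)"
    have "g y $ s = ctr p s + tt p s / 2" if s: "s \<in> Bset k p - {l}" for s
    proof -
      have "\<sigma> s \<in> Bset k p - {\<sigma> l}" using s sinB B_def permutes_inj[OF pmU] by (auto dest: injD)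
      then have "y $ \<sigma> s = ctr p (\<sigma> s) + tt p (\<sigma> s) / 2" using y unfolding face_iff[OF k1] by blast
      moreover have "\<delta> (\<sigma> s) = tt p (\<sigma> s) * tt p s" using dB[of "\<sigma> s"] s sinB B_def by auto
      ultimately show ?thesis by (simp add: g_def tt_def)
    qed
    moreover have "g y \<in> cubie p" using gc y unfolding face_iff[OF k1] by blast
    ultimately show "g y \<in> orient_face k p l \<and> f (g y) = y" unfolding face_iff[OF k1] using fg by blast
  qed
  have faces: "(\<lambda>F. f ` F) ` orient_faces k p = orient_faces k p"
  proof -
    have "(\<lambda>F. f ` F) ` orient_faces k p = (\<lambda>l. orient_face k p (\<sigma> l)) ` B"
      unfolding orient_faces_def B_def[symmetric] image_image using face by auto
    also have "\<dots> = orient_face k p ` (\<sigma> ` B)" by (simp add: image_image)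
    also have "\<sigma> ` B = B" using permutes_image[OF pmB] .
    finally show ?thesis unfolding orient_faces_def B_def .
  qed
  have "orient_pres_isometry f" unfolding orient_pres_isometry_def using iso det by blast
  moreover have "\<forall>l\<in>Bset k p. f ` orient_face k p l = orient_face k p (\<sigma> l)" using face B_def by blast
  ultimately show ?thesis unfolding G_rot_def using pm cub faces by blast
qed


lemma Grot_upper:
  fixes p :: "'n::finite \<Rightarrow> nat"
  assumes k: "k \<ge> 2" and BU: "Bset k p = UNIV" and c2: "CARD('n) \<ge> 2" and s: "\<sigma> \<in> G_rot k p"
  shows "evenperm \<sigma>"
proof -
  have k1: "k \<ge> 1" using k by simp
  obtain f where pm: "\<sigma> permutes UNIV" and iso: "\<forall>x y. dist (f x) (f y) = dist x y"
    and det1: "det (matrix (\<lambda>x. f x - f 0)) = 1"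
    and fc: "\<forall>l. f ` orient_face k p l = orient_face k p (\<sigma> l)"
    using s BU unfolding G_rot_def orient_pres_isometry_def by auto
  define v :: "real^'n" where "v = (\<chi> s. ctr p s + tt p s / 2)"
  have fi: "x \<in> orient_face k p l \<longleftrightarrow> x \<in> cubie p \<and> (\<forall>s. s \<noteq> l \<longrightarrow> x $ s = v $ s)" for x l
    unfolding face_iff[OF k1] BU v_def by auto
  have vc: "v \<in> cubie p" unfolding cubie_iff v_def by (simp add: tt_def)
  have vf: "v \<in> orient_face k p l" for l using fi vc by blast
  obtain l1 l2 :: 'n where l12: "l1 \<noteq> l2"
  proof -
    obtain l1 :: 'n where True by blast
    have "\<exists>l2. l2 \<noteq> l1"
    proof (rule ccontr)
      assume "\<not> (\<exists>l2. l2 \<noteq> l1)"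
      then have "(UNIV :: 'n set) = {l1}" by auto
      then have "card (UNIV :: 'n set) = card {l1}" by (rule arg_cong)
      then show False using c2 by simp
    qed
    then show ?thesis using that by blast
  qed
  have inter: "x = v" if "x \<in> orient_face k p a" "x \<in> orient_face k p b" "a \<noteq> b" for x a b
  proof -
    have "x $ s = v $ s" for s using that fi by (cases "s = a") auto
    then show ?thesis by (simp add: vec_eq_iff)
  qed
  have sne: "\<sigma> l1 \<noteq> \<sigma> l2" using l12 permutes_inj[OF pm] by (auto dest: injD)
  have fv: "f v = v"
  proof (rule inter)
    show "f v \<in> orient_face k p (\<sigma> l1)" using fc vf by blast
    show "f v \<in> orient_face k p (\<sigma> l2)" using fc vf by blast
  qed (rule sne)
  define u where "u l = (\<chi> s. if s = l then ctr p l - tt p l / 2 else v $ s)" for l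
  have uv: "u l - v = axis l (- tt p l)" for l
    by (simp add: u_def v_def axis_def vec_eq_iff)
  have uf: "u l \<in> orient_face k p l" for l
  proof -
    have "u l \<in> cubie p" unfolding cubie_iff u_def v_def by (simp add: tt_def)
    then show ?thesis unfolding fi by (simp add: u_def)
  qed
  have du: "dist (u l) v = 1" for l by (simp add: dist_norm uv norm_axis_real)
  have uniq: "x = u m" if x: "x \<in> orient_face k p m" "dist x v = 1" for x m
  proof -
    have oth: "x $ s = v $ s" if "s \<noteq> m" for s using x(1) fi that by blast
    have "x - v = axis m (x $ m - v $ m)" using oth by (auto simp: axis_def vec_eq_iff)
    then have "\<bar>x $ m - v $ m\<bar> = 1" using x(2) by (simp add: dist_norm norm_axis_real)
    moreover have "\<bar>x $ m - ctr p m\<bar> \<le> 1/2" using x(1) fi cubie_iff by blast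
    ultimately have "x $ m = ctr p m - tt p m / 2" unfolding v_def by (auto simp: tt_def abs_if split: if_splits)
    then show ?thesis using oth by (auto simp: u_def vec_eq_iff)
  qed
  have fu: "f (u l) = u (\<sigma> l)" for l
  proof (rule uniq)
    show "f (u l) \<in> orient_face k p (\<sigma> l)" using fc uf by blast
    show "dist (f (u l)) v = 1" using iso du fv by metis
  qed
  define L where "L x = f x - f 0" for x
  have lin: "linear L"
  proof (rule isometry_linear)
    show "L 0 = 0" by (simp add: L_def)
    show "\<forall>x y. dist (L x) (L y) = dist x y" using iso by (simp add: L_def dist_norm)
  qed
  have Lax: "L (axis l 1) = axis (\<sigma> l) (tt p l * tt p (\<sigma> l))" for l
  proof -
    have "L (u l - v) = L (u l) - L v" by (rule linear_diff[OF lin])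
    also have "\<dots> = u (\<sigma> l) - v" using fu fv by (simp add: L_def)
    finally have "L (u l - v) = u (\<sigma> l) - v" .
    have ax: "axis m (c::real) = c *\<^sub>R axis m 1" for m c by (simp add: axis_def vec_eq_iff)
    have "L ((- tt p l) *\<^sub>R axis l 1) = (- tt p (\<sigma> l)) *\<^sub>R axis (\<sigma> l) 1"
      using \<open>L (u l - v) = u (\<sigma> l) - v\<close> unfolding uv ax[of l "- tt p l"] ax[of "\<sigma> l" "- tt p (\<sigma> l)"] .
    then have "(- tt p l) *\<^sub>R L (axis l 1) = (- tt p (\<sigma> l)) *\<^sub>R axis (\<sigma> l) 1"
      by (simp only: linear_scale[OF lin])
    then have "(- tt p l) *\<^sub>R ((- tt p l) *\<^sub>R L (axis l 1)) = (- tt p l) *\<^sub>R ((- tt p (\<sigma> l)) *\<^sub>R axis (\<sigma> l) 1)"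
      by simp
    then show ?thesis by (simp add: axis_def vec_eq_iff)
  qed
  define \<tau> where "\<tau> = inv \<sigma>"
  have st [simp]: "\<sigma> (\<tau> i) = i" "\<tau> (\<sigma> i) = i" for i
    unfolding \<tau>_def using permutes_inverses[OF pm] by auto
  have tU: "\<tau> permutes UNIV" unfolding \<tau>_def using permutes_inv[OF pm] .
  define \<delta> where "\<delta> i = tt p (\<tau> i) * tt p i" for i
  have mat: "matrix L = (\<chi> i j. if i = \<sigma> j then \<delta> i else 0)"
    unfolding matrix_def Lax by (auto simp: \<delta>_def vec_eq_iff axis_def)
  have "prod \<delta> UNIV = prod (tt p \<circ> \<tau>) UNIV * prod (tt p) UNIV"
    unfolding \<delta>_def by (simp add: prod.distrib comp_def)
  also have "prod (tt p \<circ> \<tau>) UNIV = prod (tt p) UNIV" using prod.permute[OF tU, of "tt p"] by simp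
  also have "prod (tt p) UNIV * prod (tt p) UNIV = prod (\<lambda>i. tt p i * tt p i) UNIV" by (rule prod.distrib[symmetric])
  also have "\<dots> = 1" by simp
  finally have pd: "prod \<delta> UNIV = 1" .
  have "det (matrix L) = of_int (sign \<sigma>)" unfolding mat det_signed_perm[OF pm] pd by simp
  moreover have "L = (\<lambda>x. f x - f 0)" using L_def by (simp add: fun_eq_iff)
  ultimately have "of_int (sign \<sigma>) = (1::real)" using det1 by simp
  then show ?thesis by (simp add: sign_def split: if_splits)
qed


theorem mainTheorem2:
  fixes k :: nat and p :: "'n::finite \<Rightarrow> nat"
  assumes "CARD('n) \<ge> 3" and "k \<ge> 2" and "\<forall>i. p i < k"
    and "card (Bset k p) \<ge> 2"
  shows "(G_rot k p = (if card (Bset k p) = CARD('n) then Alt (Bset k p) else Sym (Bset k p)))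
    \<and> ((card (Bset k p) = CARD('n) \<or>
         (card (Bset k p) < CARD('n) \<and>
          (\<forall>r. Suc r < length (jlist k p) \<longrightarrow> jlist k p ! r < jlist k p ! Suc r) \<and>
          real (last (jlist k p)) < (real k - 1) / 2))
        \<longrightarrow> Gbar_rot k p = Alt (Bset k p))
    \<and> ((card (Bset k p) < CARD('n) \<and>
         (real (last (jlist k p)) = (real k - 1) / 2 \<or>
          (\<exists>r. Suc r < length (jlist k p) \<and> jlist k p ! r = jlist k p ! Suc r \<and>
               real (jlist k p ! r) < (real k - 1) / 2)))
        \<longrightarrow> Gbar_rot k p = Sym (Bset k p))"
proof -
  note n3 = assms(1) and k = assms(2) and pk = assms(3) and m2 = assms(4)
  define B where "B = Bset k p"
  have cle: "card B \<le> CARD('n)" by (rule card_mono) auto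
  have BU: "B = UNIV" if "card B = CARD('n)"
    using that by (metis card_subset_eq finite subset_UNIV)
  obtain a0 b0 where ab: "a0 \<in> B" "b0 \<in> B" "a0 \<noteq> b0"
  proof -
    have "B \<noteq> {}" using m2 B_def by auto
    then obtain a0 where a0: "a0 \<in> B" by blast
    have "card (B - {a0}) \<ge> 1" using m2 a0 B_def by (simp add: card_Diff_singleton)
    then have "B - {a0} \<noteq> {}" by (metis card.empty not_one_le_zero)
    then obtain b0 where "b0 \<in> B - {a0}" by blast
    then show ?thesis using that a0 by blast
  qed
  have GrB: "\<sigma> permutes B" if "\<sigma> \<in> G_rot k p" for \<sigma> using that B_def by (simp add: G_rot_def)
  have GbB: "\<sigma> permutes B" if "\<sigma> \<in> Gbar_rot k p" for \<sigma> using that B_def by (simp add: Gbar_rot_def)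
  have partA: "G_rot k p = (if card B = CARD('n) then Alt B else Sym B)"
  proof (cases "card B = CARD('n)")
    case True
    have "G_rot k p = Alt B"
    proof
      show "G_rot k p \<subseteq> Alt B"
      proof
        fix \<sigma> assume s: "\<sigma> \<in> G_rot k p"
        have "evenperm \<sigma>" by (rule Grot_upper[OF k _ _ s]) (use BU True B_def n3 in auto)
        then show "\<sigma> \<in> Alt B" using GrB[OF s] by (simp add: Alt_def)
      qed
      show "Alt B \<subseteq> G_rot k p"
      proof
        fix \<sigma> assume s: "\<sigma> \<in> Alt B"
        have pm: "\<sigma> permutes Bset k p" and ev: "evenperm \<sigma>" using s B_def by (auto simp: Alt_def)
        show "\<sigma> \<in> G_rot k p"
          by (rule Grot_lower[OF k pm, of 1 a0]) (use ev in \<open>auto simp: sign_def\<close>)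
      qed
    qed
    then show ?thesis using True by simp
  next
    case False
    then have "B \<noteq> UNIV" using B_def by auto
    then obtain u0 where u0: "u0 \<notin> B" by blast
    have "G_rot k p = Sym B"
    proof
      show "G_rot k p \<subseteq> Sym B" using GrB by (auto simp: Sym_def)
      show "Sym B \<subseteq> G_rot k p"
      proof
        fix \<sigma> assume s: "\<sigma> \<in> Sym B"
        have pm: "\<sigma> permutes Bset k p" using s B_def by (auto simp: Sym_def)
        show "\<sigma> \<in> G_rot k p"
          by (rule Grot_lower[OF k pm, of "of_int (sign \<sigma>)" u0]) (use u0 B_def in \<open>auto simp: sign_def\<close>)
      qed
    qed
    then show ?thesis using False by simp
  qed
  have AltG: "Alt B \<subseteq> Gbar_rot k p"
  proof
    fix \<sigma> assume s: "\<sigma> \<in> Alt B"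
    have pm: "\<sigma> permutes Bset k p" and ev: "evenperm \<sigma>" using s B_def by (auto simp: Alt_def)
    have "Good k p \<sigma>" using parity_induct[of a0 k p b0 \<sigma>] ab B_def k pm ev by auto
    then show "\<sigma> \<in> Gbar_rot k p" using Good_Gbar pm pk by blast
  qed
  have partB: "Gbar_rot k p = Alt B"
    if H: "\<forall>u. u \<notin> Bset k p \<longrightarrow> (\<forall>v. v \<notin> Bset k p \<longrightarrow> bar k (p u) = bar k (p v) \<longrightarrow> u = v) \<and> 2 * p u \<noteq> k - 1"
  proof
    show "Gbar_rot k p \<subseteq> Alt B"
    proof
      fix \<sigma> assume s: "\<sigma> \<in> Gbar_rot k p"
      have "evenperm \<sigma>" by (rule Gbar_upper[OF k pk s H])
      then show "\<sigma> \<in> Alt B" using GbB[OF s] by (simp add: Alt_def)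
    qed
  qed (rule AltG)
  have partC: "Gbar_rot k p = Sym B" if t0: "Good k p (Transposition.transpose a0 b0)"
  proof
    show "Gbar_rot k p \<subseteq> Sym B" using GbB by (auto simp: Sym_def)
    show "Sym B \<subseteq> Gbar_rot k p"
    proof
      fix \<sigma> assume s: "\<sigma> \<in> Sym B"
      have pm: "\<sigma> permutes Bset k p" using s B_def by (auto simp: Sym_def)
      show "\<sigma> \<in> Gbar_rot k p"
      proof (cases "evenperm \<sigma>")
        case True
        then show ?thesis using AltG pm B_def by (auto simp: Alt_def)
      next
        case False
        let ?t = "Transposition.transpose a0 b0"
        have g: "Good k p (?t \<circ> \<sigma>)" using parity_induct[of a0 k p b0 \<sigma>] ab B_def k pm False by auto
        have pm2: "?t \<circ> \<sigma> permutes Bset k p"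
          using ab pm B_def by (simp add: permutes_compose permutes_swap_id)
        have "Good k p (?t \<circ> (?t \<circ> \<sigma>))" by (rule Good_comp[OF g pm2 t0])
        moreover have "?t \<circ> (?t \<circ> \<sigma>) = \<sigma>" by (rule ext) simp
        ultimately have "Good k p \<sigma>" by simp
        then show ?thesis using Good_Gbar pm pk by blast
      qed
    qed
  qed
  have part2: "Gbar_rot k p = Alt B"
    if c: "card B = CARD('n) \<or>
         (card B < CARD('n) \<and>
          (\<forall>r. Suc r < length (jlist k p) \<longrightarrow> jlist k p ! r < jlist k p ! Suc r) \<and>
          real (last (jlist k p)) < (real k - 1) / 2)"
  proof (rule partB)
    show "\<forall>u. u \<notin> Bset k p \<longrightarrow> (\<forall>v. v \<notin> Bset k p \<longrightarrow> bar k (p u) = bar k (p v) \<longrightarrow> u = v) \<and> 2 * p u \<noteq> k - 1"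
    proof (cases "card B = CARD('n)")
      case True
      then show ?thesis using BU B_def by auto
    next
      case False
      then have "card (Bset k p) < CARD('n)"
        "\<forall>r. Suc r < length (jlist k p) \<longrightarrow> jlist k p ! r < jlist k p ! Suc r"
        "real (last (jlist k p)) < (real k - 1) / 2" using c B_def by auto
      then show ?thesis using jlist_J2[OF pk] by blast
    qed
  qed
  have part3: "Gbar_rot k p = Sym B"
    if c: "card B < CARD('n) \<and>
         (real (last (jlist k p)) = (real k - 1) / 2 \<or>
          (\<exists>r. Suc r < length (jlist k p) \<and> jlist k p ! r = jlist k p ! Suc r \<and>
               real (jlist k p ! r) < (real k - 1) / 2))"
  proof (rule partC)
    have va: "p a0 = 0 \<or> p a0 = k - 1" "p b0 = 0 \<or> p b0 = k - 1" using ab B_def by (auto simp: Bset_def)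
    show "Good k p (Transposition.transpose a0 b0)"
    proof (cases "real (last (jlist k p)) = (real k - 1) / 2")
      case True
      obtain z where z: "z \<notin> Bset k p" "k - 1 - p z = p z"
        using jlist_J3[OF pk _ True] c B_def by blast
      have "Reach k p (Transposition.transpose a0 b0) p"
        by (rule swap_invisible[OF ab(3) _ _ k va z(2)]) (use z ab B_def in auto)
      then show ?thesis unfolding Good_def by blast
    next
      case False
      then obtain cc dd where cd: "cc \<noteq> dd" "cc \<notin> Bset k p" "dd \<notin> Bset k p"
        "p cc = p dd \<or> p cc = k - 1 - p dd" "k - 1 - p cc \<noteq> p cc"
        using jlist_J4[OF pk] c by blast
      have R: "Reach k p (Transposition.transpose cc dd \<circ> Transposition.transpose a0 b0) p"
        by (rule swap_pair[OF ab(3) cd(1) _ _ _ _ k va cd(4) _ _ cd(5)]) (use cd ab B_def pk in auto)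
      have "\<forall>l\<in>Bset k p. (Transposition.transpose cc dd \<circ> Transposition.transpose a0 b0) l = Transposition.transpose a0 b0 l"
      proof
        fix l assume l: "l \<in> Bset k p"
        have "Transposition.transpose a0 b0 l \<in> Bset k p"
          using l ab B_def permutes_in_image[OF permutes_swap_id[of a0 "Bset k p" b0]] by auto
        then have "Transposition.transpose a0 b0 l \<noteq> cc" "Transposition.transpose a0 b0 l \<noteq> dd" using cd by auto
        then show "(Transposition.transpose cc dd \<circ> Transposition.transpose a0 b0) l = Transposition.transpose a0 b0 l"
          by (simp add: transpose_apply_other)
      qed
      then show ?thesis unfolding Good_def using R by blast
    qed
  qed
  show ?thesis using partA part2 part3 B_def by simp
qed

end
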